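(* In the Cournot game described in the context, suppose each $J^i$ is twice continuously differentiable and $p(\sigma)=-D\sigma+d$ with $D\in\mathbb{R}^{V\times V}$, $D\succeq0$, $d\in\mathbb{R}^V$. If the communication matrix $T$ is symmetric ($T=T^\top$), then for every even $\nu\in\mathbb{N}$ the operator $F_\nu(x)=[\nabla_{x^i}J^i(x^i,\sigma^i_\nu(x))]_{i=1}^N$ is strongly monotone on $\mathcal{X}$.
   Context: Cournot game: $N$ firms, $V$ markets (nodes of a directed transportation network with $E$ edges and incidence matrix $B\in\{0,1,-1\}^{V\times E}$). Firm $i$ produces at location $\ell_i$; its strategy is $x^i=[t^i;r^i]\in\mathbb{R}^{E+1}_{\ge0}$ ($t^i_e$ transported on edge $e$, $r^i$ total production); sales $y^i=H^ix^i$ with $H^i=[B,e_{\ell_i}]\in\mathbb{R}^{V\times(E+1)}$. Individual constraint $\mathcal{X}^i=\{x^i\in\mathbb{R}^{E+1}_{\ge0}:x^i\le\bar r^i\mathbf{1}_{E+1},\ H^ix^i\ge0\}$, $\bar r^i>0$; $\mathcal{X}=\mathcal{X}^1\times\dots\times\mathcal{X}^N$. Costs $c^i_e(t)=\beta^i_et-\gamma^i_e(t)$, $a^i(r)=\beta^i_ar-\gamma^i_a(r)$, each $\gamma$ strongly concave, increasing, with maximum derivative smaller than the corresponding $\beta$. $J^i(z_1,z_2)=a^i(r^i)+\sum_ec^i_e(t^i_e)-p(z_2)^\top H^iz_1$, $z_1=x^i$. Communication matrix $T\in[0,1]^{N\times N}$, primitive and doubly stochastic. Local aggregate $\sigma^i_\nu(x)=\sum_j[T^\nu]_{ij}H^jx^j$;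 $\nabla_{x^i}J^i(x^i,\sigma^i_\nu(x))$ is the gradient of $x^i\mapsto J^i(x^i,[T^\nu]_{ii}H^ix^i+\sum_{j\ne i}[T^\nu]_{ij}H^jx^j)$. $D\succeq0$ means $z^\top Dz\ge0$ for all $z$. Strongly monotone: exists $\alpha>0$ with $(F(x)-F(y))^\top(x-y)\ge\alpha\|x-y\|^2$ for all $x,y\in\mathcal{X}$. *)

theory Defs
  imports "HOL-Analysis.Analysis"
begin

primrec mpow :: "real^'n^'n \<Rightarrow> nat \<Rightarrow> real^'n^'n" where
  "mpow T 0 = mat 1"
| "mpow T (Suc k) = T ** mpow T k"

definition doubly_stochastic :: "real^'n^'n \<Rightarrow> bool" where
  "doubly_stochastic T \<longleftrightarrow> (\<forall>i j. 0 \<le> T$i$j) \<and>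
     (\<forall>i. (\<Sum>j\<in>UNIV. T$i$j) = 1) \<and> (\<forall>j. (\<Sum>i\<in>UNIV. T$i$j) = 1)"

definition primitive_matrix :: "real^'n^'n \<Rightarrow> bool" where
  "primitive_matrix T \<longleftrightarrow> (\<forall>i j. 0 \<le> T$i$j) \<and> (\<exists>k. \<forall>i j. 0 < mpow T k $i$j)"

definition strongly_concave_on :: "real set \<Rightarrow> (real \<Rightarrow> real) \<Rightarrow> bool" where
  "strongly_concave_on S f \<longleftrightarrow> (\<exists>\<mu>>0. \<forall>x\<in>S. \<forall>y\<in>S. \<forall>\<theta>\<in>{0..1}.
     \<theta> * f x + (1 - \<theta>) * f y + \<mu> / 2 * \<theta> * (1 - \<theta>) * (x - y)^2 \<le> f (\<theta> * x + (1 - \<theta>) * y))"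

definition C2_real :: "(real \<Rightarrow> real) \<Rightarrow> bool" where
  "C2_real f \<longleftrightarrow> (\<exists>f' f''. (\<forall>x. (f has_real_derivative f' x) (at x)) \<and>
     (\<forall>x. (f' has_real_derivative f'' x) (at x)) \<and> continuous_on UNIV f'')"

definition grad :: "('a::euclidean_space \<Rightarrow> real) \<Rightarrow> 'a \<Rightarrow> 'a" where
  "grad f z = (THE g. (f has_derivative (\<lambda>h. g \<bullet> h)) (at z))"

(* Strategy of a firm: (t, r) with t \<in> R^E transported quantities, r total production.
   H^i x^i = B t + r e_{loc i}. *)
definition Hmap :: "real^'e^'v \<Rightarrow> 'v \<Rightarrow> (real^'e) \<times> real \<Rightarrow> real^'v" where
  "Hmap B l z = B *v fst z + snd z *\<^sub>R axis l 1"

definition Xset :: "real^'e^'v \<Rightarrow> 'v \<Rightarrow> real \<Rightarrow> ((real^'e) \<times> real) set" where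
  "Xset B l rbar = {z. (\<forall>e. 0 \<le> fst z $ e \<and> fst z $ e \<le> rbar) \<and> 0 \<le> snd z \<and> snd z \<le> rbar
                      \<and> (\<forall>v. 0 \<le> Hmap B l z $ v)}"

definition Jcost :: "real^'e^'v \<Rightarrow> 'v \<Rightarrow> (real \<Rightarrow> real) \<Rightarrow> ('e \<Rightarrow> real \<Rightarrow> real)
     \<Rightarrow> (real^'v \<Rightarrow> real^'v) \<Rightarrow> (real^'e) \<times> real \<Rightarrow> real^'v \<Rightarrow> real" where
  "Jcost B l a c p z1 z2 = a (snd z1) + (\<Sum>e\<in>UNIV. c e (fst z1 $ e)) - p z2 \<bullet> Hmap B l z1"

definition sigma_loc :: "real^'n^'n \<Rightarrow> nat \<Rightarrow> real^'e^'v \<Rightarrow> ('n \<Rightarrow> 'v)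
     \<Rightarrow> ('n \<Rightarrow> (real^'e) \<times> real) \<Rightarrow> 'n \<Rightarrow> real^'v" where
  "sigma_loc T \<nu> B loc x i = (\<Sum>j\<in>UNIV. mpow T \<nu> $ i $ j *\<^sub>R Hmap B (loc j) (x j))"

definition Fop :: "real^'n^'n \<Rightarrow> nat \<Rightarrow> real^'e^'v \<Rightarrow> ('n \<Rightarrow> 'v)
     \<Rightarrow> ('n \<Rightarrow> real \<Rightarrow> real) \<Rightarrow> ('n \<Rightarrow> 'e \<Rightarrow> real \<Rightarrow> real) \<Rightarrow> (real^'v \<Rightarrow> real^'v)
     \<Rightarrow> ('n \<Rightarrow> (real^'e) \<times> real) \<Rightarrow> 'n \<Rightarrow> (real^'e) \<times> real" where
  "Fop T \<nu> B loc a c p x i = grad (\<lambda>z. Jcost B (loc i) (a i) (c i) p z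
      (mpow T \<nu> $ i $ i *\<^sub>R Hmap B (loc i) z
       + (\<Sum>j\<in>UNIV - {i}. mpow T \<nu> $ i $ j *\<^sub>R Hmap B (loc j) (x j)))) (x i)"

definition strongly_monotone_on :: "('n::finite \<Rightarrow> 'a::real_inner) set
     \<Rightarrow> (('n \<Rightarrow> 'a) \<Rightarrow> 'n \<Rightarrow> 'a) \<Rightarrow> bool" where
  "strongly_monotone_on X F \<longleftrightarrow> (\<exists>\<alpha>>0. \<forall>x\<in>X. \<forall>y\<in>X.
     (\<Sum>i\<in>UNIV. (F x i - F y i) \<bullet> (x i - y i)) \<ge> \<alpha> * (\<Sum>i\<in>UNIV. (norm (x i - y i))^2))"

end

theory Submission
  imports Defs
begin


lemma mpow_add: "mpow T (a + b) = mpow T a ** mpow T b"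
  by (induction a) (auto simp: matrix_mul_assoc)

lemma mpow_comm: "mpow T m ** T = T ** mpow T m"
proof -
  have "mpow T (m + 1) = mpow T (1 + m)" by simp
  then show ?thesis by (simp only: mpow_add) simp
qed

lemma mpow_sym: assumes "transpose T = T" shows "transpose (mpow T m) = mpow T m"
  by (induction m) (auto simp: matrix_transpose_mul assms mpow_comm)

lemma mpow_even_entry:
  fixes T :: "real^'n^'n"
  assumes "transpose T = T" "even \<nu>"
  shows "\<exists>S::real^'n^'n. \<forall>i j. mpow T \<nu> $ i $ j = (\<Sum>k\<in>UNIV. S $ k $ i * S $ k $ j)"
proof -
  obtain m where m: "\<nu> = m + m" using assms(2) by (metis evenE mult_2)
  have st: "transpose (mpow T m) = mpow T m" by (rule mpow_sym[OF assms(1)])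
  have "mpow T \<nu> $ i $ j = (\<Sum>k\<in>UNIV. mpow T m $ k $ i * mpow T m $ k $ j)" for i j
  proof -
    have "mpow T \<nu> $ i $ j = (\<Sum>k\<in>UNIV. mpow T m $ i $ k * mpow T m $ k $ j)"
      by (simp add: m mpow_add matrix_matrix_mult_def)
    also have "\<dots> = (\<Sum>k\<in>UNIV. mpow T m $ k $ i * mpow T m $ k $ j)"
      by (metis (no_types, lifting) st transpose_def vec_lambda_beta)
    finally show ?thesis .
  qed
  then show ?thesis by (intro exI[of _ "mpow T m"]) blast
qed

lemma quad_nonneg:
  fixes D :: "real^'v^'v" and w :: "'n::finite \<Rightarrow> real^'v"
  assumes psd: "\<forall>z. 0 \<le> z \<bullet> (D *v z)"
    and M: "\<forall>i j. M $ i $ j = (\<Sum>k\<in>UNIV. S $ k $ i * S $ k $ j)"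
  shows "0 \<le> (\<Sum>i\<in>UNIV. \<Sum>j\<in>UNIV. M $ i $ j * (w i \<bullet> (D *v w j)))"
proof -
  define y where "y k = (\<Sum>i\<in>UNIV. S $ k $ i *\<^sub>R w i)" for k
  have "(\<Sum>i\<in>UNIV. \<Sum>j\<in>UNIV. M $ i $ j * (w i \<bullet> (D *v w j)))
     = (\<Sum>k\<in>UNIV. y k \<bullet> (D *v y k))"
  proof -
    have lin: "D *v y k = (\<Sum>j\<in>UNIV. S $ k $ j *\<^sub>R (D *v w j))" for k
      unfolding y_def
      by (simp add: linear_sum[OF matrix_vector_mul_linear] matrix_vector_mult_scaleR)
    have yk: "y k \<bullet> (D *v y k) = (\<Sum>j\<in>UNIV. \<Sum>i\<in>UNIV. S $ k $ j * (S $ k $ i * (w i \<bullet> (D *v w j))))" for k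
      unfolding lin by (simp add: y_def inner_sum_left inner_sum_right sum_distrib_left mult.assoc)
    have "(\<Sum>k\<in>UNIV. y k \<bullet> (D *v y k)) =
        (\<Sum>k\<in>UNIV. \<Sum>j\<in>UNIV. \<Sum>i\<in>UNIV. S $ k $ j * (S $ k $ i * (w i \<bullet> (D *v w j))))"
      by (simp add: yk)
    also have "\<dots> = (\<Sum>j\<in>UNIV. \<Sum>i\<in>UNIV. \<Sum>k\<in>UNIV. S $ k $ j * (S $ k $ i * (w i \<bullet> (D *v w j))))"
      by (rule trans[OF sum.swap sum.cong[OF refl sum.swap]])
    also have "\<dots> = (\<Sum>i\<in>UNIV. \<Sum>j\<in>UNIV. \<Sum>k\<in>UNIV. S $ k $ j * (S $ k $ i * (w i \<bullet> (D *v w j))))"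
      by (rule sum.swap)
    also have "\<dots> = (\<Sum>i\<in>UNIV. \<Sum>j\<in>UNIV. M $ i $ j * (w i \<bullet> (D *v w j)))"
      by (simp add: M sum_distrib_left mult.commute mult.left_commute)
    finally show ?thesis by simp
  qed
  also have "0 \<le> \<dots>" using psd by (simp add: sum_nonneg)
  finally show ?thesis by simp
qed



lemma sc_tangent:
  fixes f f' :: "real \<Rightarrow> real"
  assumes sc: "\<forall>x\<in>S. \<forall>y\<in>S. \<forall>\<theta>\<in>{0..1}.
     \<theta> * f x + (1 - \<theta>) * f y + \<mu> / 2 * \<theta> * (1 - \<theta>) * (x - y)^2 \<le> f (\<theta> * x + (1 - \<theta>) * y)"
    and der: "\<And>x. (f has_real_derivative f' x) (at x)"
    and x: "x \<in> S" and y: "y \<in> S"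
  shows "f x - f y + \<mu> / 2 * (x - y)^2 \<le> f' y * (x - y)"
proof -
  define \<phi> where "\<phi> t = f (y + t * (x - y))" for t
  have d\<phi>: "(\<phi> has_real_derivative f' y * (x - y)) (at 0)"
  proof -
    have "((\<lambda>t. y + t * (x - y)) has_real_derivative (x - y)) (at 0)"
      by (auto intro!: derivative_eq_intros)
    from DERIV_chain2[OF _ this, of f "f' y"] der show ?thesis
      by (simp add: \<phi>_def[abs_def])
  qed
  then have "((\<lambda>t. (\<phi> t - \<phi> 0) / (t - 0)) \<longlongrightarrow> f' y * (x - y)) (at 0)"
    by (simp only: has_field_derivative_iff)
  then have lim1: "((\<lambda>t. (\<phi> t - \<phi> 0) / (t - 0)) \<longlongrightarrow> f' y * (x - y)) (at_right 0)"
    by (rule tendsto_mono[OF at_le[OF subset_UNIV]])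
  have lim2: "((\<lambda>t. f x - f y + \<mu> / 2 * (1 - t) * (x - y)^2) \<longlongrightarrow> f x - f y + \<mu> / 2 * (1 - 0) * (x - y)^2) (at_right 0)"
    by (intro tendsto_intros)
  have ev: "\<forall>\<^sub>F t in at_right 0. f x - f y + \<mu> / 2 * (1 - t) * (x - y)^2 \<le> (\<phi> t - \<phi> 0) / (t - 0)"
  proof -
    have "\<forall>\<^sub>F t in at_right (0::real). t \<in> {0<..<1}"
      by (rule eventually_at_right_real) simp
    then show ?thesis
    proof (rule eventually_mono)
      fix t :: real assume t: "t \<in> {0<..<1}"
      have t01: "t \<in> {0..1}" using t by simp
      have h: "t * f x + (1 - t) * f y + \<mu> / 2 * t * (1 - t) * (x - y)^2 \<le> f (t * x + (1 - t) * y)"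
        using sc x y t01 by blast
      have "t * x + (1 - t) * y = y + t * (x - y)" by algebra
      then have p: "\<phi> t - \<phi> 0 = f (t * x + (1 - t) * y) - f y" by (simp add: \<phi>_def)
      have q: "t * (f x - f y + \<mu> / 2 * (1 - t) * (x - y)^2) = t * f x + (1 - t) * f y + \<mu> / 2 * t * (1 - t) * (x - y)^2 - f y"
        by (simp add: algebra_simps)
      have "t * (f x - f y + \<mu> / 2 * (1 - t) * (x - y)^2) \<le> \<phi> t - \<phi> 0"
        unfolding p q using h by linarith
      then show "f x - f y + \<mu> / 2 * (1 - t) * (x - y)^2 \<le> (\<phi> t - \<phi> 0) / (t - 0)"
        using t by (simp add: pos_le_divide_eq mult.commute)
    qed
  qed
  have "f x - f y + \<mu> / 2 * (1 - 0) * (x - y)^2 \<le> f' y * (x - y)"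
    by (rule tendsto_le[OF _ lim1 lim2 ev]) simp
  then show ?thesis by simp
qed

lemma sc_mono:
  fixes f f' :: "real \<Rightarrow> real"
  assumes sc: "\<forall>x\<in>S. \<forall>y\<in>S. \<forall>\<theta>\<in>{0..1}.
     \<theta> * f x + (1 - \<theta>) * f y + \<mu> / 2 * \<theta> * (1 - \<theta>) * (x - y)^2 \<le> f (\<theta> * x + (1 - \<theta>) * y)"
    and der: "\<And>x. (f has_real_derivative f' x) (at x)"
    and x: "x \<in> S" and y: "y \<in> S"
  shows "\<mu> * (x - y)^2 \<le> (f' y - f' x) * (x - y)"
proof -
  have 1: "f x - f y + \<mu> / 2 * (x - y)^2 \<le> f' y * (x - y)" by (rule sc_tangent[OF sc der x y])
  have 2: "f y - f x + \<mu> / 2 * (y - x)^2 \<le> f' x * (y - x)" by (rule sc_tangent[OF sc der y x])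
  have "(y - x)^2 = (x - y)^2" by algebra
  have 3: "(f' y - f' x) * (x - y) = f' y * (x - y) + f' x * (y - x)" by (simp add: algebra_simps)
  have 4: "\<mu> * (x - y)^2 = \<mu> / 2 * (x - y)^2 + \<mu> / 2 * (x - y)^2" by simp
  show ?thesis unfolding 3 4 using 1 2[unfolded \<open>(y - x)^2 = (x - y)^2\<close>] by linarith
qed



lemma grad_eq:
  fixes f :: "'a::euclidean_space \<Rightarrow> real"
  assumes "(f has_derivative (\<lambda>h. g \<bullet> h)) (at z)"
  shows "grad f z = g"
  unfolding grad_def
proof (rule the_equality[where P="\<lambda>g. (f has_derivative (\<lambda>h. g \<bullet> h)) (at z)"])
  show "(f has_derivative (\<lambda>h. g \<bullet> h)) (at z)" by (rule assms)
  fix g' assume "(f has_derivative (\<lambda>h. g' \<bullet> h)) (at z)"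
  from has_derivative_unique[OF this assms] have "\<And>h. g' \<bullet> h = g \<bullet> h" by metis
  then have "(g' - g) \<bullet> (g' - g) = 0" by (simp add: inner_diff_left inner_diff_right)
  then show "g' = g" by simp
qed

lemma Hmap_lin: "bounded_linear (Hmap B l)"
proof -
  have "linear (Hmap B l)"
    by (rule linearI) (auto simp: Hmap_def matrix_vector_right_distrib scaleR_add_left
       matrix_vector_mult_scaleR algebra_simps)
  then show ?thesis using linear_conv_bounded_linear by blast
qed

lemma comp_lin: "bounded_linear (\<lambda>z::(real^'e::finite) \<times> real. fst z $ e)"
proof -
  have "linear (\<lambda>z::(real^'e::finite) \<times> real. fst z $ e)"
    by (rule linearI) auto
  then show ?thesis using linear_conv_bounded_linear by blast
qed

lemma Hmap_adj: "w \<bullet> Hmap B l h = (w v* B, w $ l) \<bullet> h"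
  by (simp add: Hmap_def inner_add_right dot_lmul_matrix inner_Pair_0 inner_prod_def inner_axis)

lemma grad_J:
  fixes B :: "real^'e::finite^'v::finite" and l :: 'v and D :: "real^'v^'v" and d s :: "real^'v"
    and z :: "(real^'e) \<times> real"
  assumes da: "\<And>r. (ga has_real_derivative ga' r) (at r)"
    and dc: "\<And>e t. (gc e has_real_derivative gc' e t) (at t)"
  shows "grad (\<lambda>z. Jcost B l (\<lambda>r. ba*r - ga r) (\<lambda>e t. bc e * t - gc e t) (\<lambda>\<sigma>. -(D *v \<sigma>) + d) z
             (\<tau> *\<^sub>R Hmap B l z + s)) z
     = ((\<chi> e. bc e - gc' e (fst z $ e)), ba - ga' (snd z))
       + ((\<tau> *\<^sub>R (Hmap B l z v* D) + D *v (\<tau> *\<^sub>R Hmap B l z + s) - d) v* B,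
          (\<tau> *\<^sub>R (Hmap B l z v* D) + D *v (\<tau> *\<^sub>R Hmap B l z + s) - d) $ l)"
proof (rule grad_eq)
  let ?H = "Hmap B l"
  have dH: "(?H has_derivative ?H) (at z)" by (rule bounded_linear.has_derivative[OF Hmap_lin has_derivative_ident])
  have d1: "((\<lambda>z. ba * snd z - ga (snd z)) has_derivative (\<lambda>h. ba * snd h - ga' (snd z) * snd h)) (at z)"
    by (intro has_derivative_diff has_derivative_mult_right has_derivative_snd has_derivative_ident
         has_derivative_compose[OF _ has_field_derivative_imp_has_derivative[OF da]])
  have d2: "((\<lambda>z. \<Sum>e\<in>UNIV. bc e * (fst z $ e) - gc e (fst z $ e)) has_derivative
       (\<lambda>h. \<Sum>e\<in>UNIV. bc e * (fst h $ e) - gc' e (fst z $ e) * (fst h $ e))) (at z)"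
    by (intro has_derivative_sum has_derivative_diff has_derivative_mult_right
         bounded_linear.has_derivative[OF comp_lin has_derivative_ident]
         has_derivative_compose[OF bounded_linear.has_derivative[OF comp_lin has_derivative_ident]
           has_field_derivative_imp_has_derivative[OF dc]])
  have d3: "((\<lambda>z. (-(D *v (\<tau> *\<^sub>R ?H z + s)) + d) \<bullet> ?H z) has_derivative
      (\<lambda>h. (-(D *v (\<tau> *\<^sub>R ?H h))) \<bullet> ?H z + (-(D *v (\<tau> *\<^sub>R ?H z + s)) + d) \<bullet> ?H h)) (at z)"
  proof -
    have dM: "((\<lambda>z. -(D *v (\<tau> *\<^sub>R ?H z + s)) + d) has_derivative (\<lambda>h. -(D *v (\<tau> *\<^sub>R ?H h)))) (at z)"
    proof -
      have bl: "bounded_linear (\<lambda>v. D *v v)"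
        using matrix_vector_mul_linear linear_conv_bounded_linear by blast
      have "((\<lambda>z. \<tau> *\<^sub>R ?H z + s) has_derivative (\<lambda>h. \<tau> *\<^sub>R ?H h + 0)) (at z)"
        by (intro has_derivative_add has_derivative_scaleR_right dH has_derivative_const)
      from bounded_linear.has_derivative[OF bl this]
      have dD: "((\<lambda>z. D *v (\<tau> *\<^sub>R ?H z + s)) has_derivative (\<lambda>h. D *v (\<tau> *\<^sub>R ?H h))) (at z)" by simp
      show ?thesis
        using has_derivative_add[OF has_derivative_minus[OF dD] has_derivative_const[of d]] by simp
    qed
    show ?thesis using has_derivative_inner[OF dM dH] by (simp add: add.commute)
  qed
  have "((\<lambda>z. Jcost B l (\<lambda>r. ba*r - ga r) (\<lambda>e t. bc e * t - gc e t) (\<lambda>\<sigma>. -(D *v \<sigma>) + d) z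
             (\<tau> *\<^sub>R Hmap B l z + s)) has_derivative
     (\<lambda>h. (ba * snd h - ga' (snd z) * snd h) + (\<Sum>e\<in>UNIV. bc e * (fst h $ e) - gc' e (fst z $ e) * (fst h $ e))
        - ((-(D *v (\<tau> *\<^sub>R ?H h))) \<bullet> ?H z + (-(D *v (\<tau> *\<^sub>R ?H z + s)) + d) \<bullet> ?H h))) (at z)"
    unfolding Jcost_def by (intro has_derivative_diff has_derivative_add d1 d2 d3)
  then show "(( \<lambda>z. Jcost B l (\<lambda>r. ba*r - ga r) (\<lambda>e t. bc e * t - gc e t) (\<lambda>\<sigma>. -(D *v \<sigma>) + d) z
             (\<tau> *\<^sub>R Hmap B l z + s)) has_derivative (\<lambda>h. (((\<chi> e. bc e - gc' e (fst z $ e)), ba - ga' (snd z))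
       + ((\<tau> *\<^sub>R (Hmap B l z v* D) + D *v (\<tau> *\<^sub>R Hmap B l z + s) - d) v* B,
          (\<tau> *\<^sub>R (Hmap B l z v* D) + D *v (\<tau> *\<^sub>R Hmap B l z + s) - d) $ l)) \<bullet> h)) (at z)"
  proof (rule has_derivative_eq_rhs)
    show "(\<lambda>h. (ba * snd h - ga' (snd z) * snd h) + (\<Sum>e\<in>UNIV. bc e * (fst h $ e) - gc' e (fst z $ e) * (fst h $ e))
        - ((-(D *v (\<tau> *\<^sub>R ?H h))) \<bullet> ?H z + (-(D *v (\<tau> *\<^sub>R ?H z + s)) + d) \<bullet> ?H h)) =
      (\<lambda>h. (((\<chi> e. bc e - gc' e (fst z $ e)), ba - ga' (snd z))
       + ((\<tau> *\<^sub>R (Hmap B l z v* D) + D *v (\<tau> *\<^sub>R Hmap B l z + s) - d) v* B,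
          (\<tau> *\<^sub>R (Hmap B l z v* D) + D *v (\<tau> *\<^sub>R Hmap B l z + s) - d) $ l)) \<bullet> h)"
    proof
      fix h :: "(real^'e) \<times> real"
      let ?w = "\<tau> *\<^sub>R (Hmap B l z v* D) + D *v (\<tau> *\<^sub>R Hmap B l z + s) - d"
      have e1: "(-(D *v (\<tau> *\<^sub>R ?H h))) \<bullet> ?H z = - (\<tau> *\<^sub>R (Hmap B l z v* D)) \<bullet> ?H h"
        by (simp add: matrix_vector_mult_scaleR) (metis dot_lmul_matrix inner_commute)
      have e2: "((\<chi> e. bc e - gc' e (fst z $ e)), ba - ga' (snd z)) \<bullet> h
          = (ba * snd h - ga' (snd z) * snd h) + (\<Sum>e\<in>UNIV. bc e * (fst h $ e) - gc' e (fst z $ e) * (fst h $ e))"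
        by (simp add: inner_prod_def inner_vec_def algebra_simps)
      have "(((\<chi> e. bc e - gc' e (fst z $ e)), ba - ga' (snd z)) + (?w v* B, ?w $ l)) \<bullet> h
         = ((\<chi> e. bc e - gc' e (fst z $ e)), ba - ga' (snd z)) \<bullet> h + ?w \<bullet> ?H h"
        by (simp only: Hmap_adj inner_add_left)
      also have "?w \<bullet> ?H h = (\<tau> *\<^sub>R (Hmap B l z v* D)) \<bullet> ?H h + (D *v (\<tau> *\<^sub>R Hmap B l z + s) - d) \<bullet> ?H h"
        by (simp add: inner_add_left inner_diff_left)
      finally show "(ba * snd h - ga' (snd z) * snd h) + (\<Sum>e\<in>UNIV. bc e * (fst h $ e) - gc' e (fst z $ e) * (fst h $ e))
        - ((-(D *v (\<tau> *\<^sub>R ?H h))) \<bullet> ?H z + (-(D *v (\<tau> *\<^sub>R ?H z + s)) + d) \<bullet> ?H h) =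
        (((\<chi> e. bc e - gc' e (fst z $ e)), ba - ga' (snd z)) + (?w v* B, ?w $ l)) \<bullet> h"
        unfolding e2[symmetric] e1 by (simp add: inner_add_left inner_diff_left)
    qed
  qed
qed



lemma vm_diff: "(a - b) v* (D::real^'v::finite^'v) = a v* D - b v* D"
  by (simp add: vec_eq_iff vector_matrix_mult_def sum_subtractf algebra_simps)

lemma vm_scale: "(c *\<^sub>R a) v* (D::real^'v::finite^'v) = c *\<^sub>R (a v* D)"
  by (simp add: vec_eq_iff vector_matrix_mult_def sum_distrib_left algebra_simps)

lemma W_inner:
  fixes D :: "real^'v::finite^'v" and a b w sa sb d :: "real^'v"
  shows "((\<tau> *\<^sub>R (a v* D) + D *v (\<tau> *\<^sub>R a + sa) - d) - (\<tau> *\<^sub>R (b v* D) + D *v (\<tau> *\<^sub>R b + sb) - d)) \<bullet> (a - b)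
     = 2 * \<tau> * ((a - b) \<bullet> (D *v (a - b))) + (a - b) \<bullet> (D *v (sa - sb))"
proof -
  let ?u = "a - b"
  have v: "(\<tau> *\<^sub>R (a v* D) + D *v (\<tau> *\<^sub>R a + sa) - d) - (\<tau> *\<^sub>R (b v* D) + D *v (\<tau> *\<^sub>R b + sb) - d)
      = \<tau> *\<^sub>R (?u v* D) + (\<tau> *\<^sub>R (D *v ?u) + D *v (sa - sb))"
    by (simp add: vm_diff scaleR_diff_right matrix_vector_mult_diff_distrib matrix_vector_right_distrib
        matrix_vector_mult_scaleR)
  have 1: "(?u v* D) \<bullet> ?u = ?u \<bullet> (D *v ?u)" by (rule dot_lmul_matrix)
  have 2: "(D *v ?u) \<bullet> ?u = ?u \<bullet> (D *v ?u)" by (rule inner_commute)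
  have 3: "(D *v (sa - sb)) \<bullet> ?u = ?u \<bullet> (D *v (sa - sb))" by (rule inner_commute)
  show ?thesis unfolding v inner_add_left inner_scaleR_left 1 2 3 by simp
qed

theorem lemma4:
  fixes B :: "real^'e::finite^'v::finite"
    and loc :: "'n::finite \<Rightarrow> 'v"
    and rbar :: "'n \<Rightarrow> real"
    and \<beta>a :: "'n \<Rightarrow> real" and \<gamma>a :: "'n \<Rightarrow> real \<Rightarrow> real"
    and \<beta>c :: "'n \<Rightarrow> 'e \<Rightarrow> real" and \<gamma>c :: "'n \<Rightarrow> 'e \<Rightarrow> real \<Rightarrow> real"
    and D :: "real^'v^'v" and d :: "real^'v"
    and T :: "real^'n^'n"
    and \<nu> :: nat
  assumes B_inc: "\<forall>v e. B$v$e \<in> {-1, 0, 1}"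
    and rbar_pos: "\<forall>i. 0 < rbar i"
    and C2_a: "\<forall>i. C2_real (\<gamma>a i)"
    and C2_c: "\<forall>i e. C2_real (\<gamma>c i e)"
    and sc_a: "\<forall>i. strongly_concave_on {0..rbar i} (\<gamma>a i)"
    and sc_c: "\<forall>i e. strongly_concave_on {0..rbar i} (\<gamma>c i e)"
    and inc_a: "\<forall>i. mono_on {0..rbar i} (\<gamma>a i)"
    and inc_c: "\<forall>i e. mono_on {0..rbar i} (\<gamma>c i e)"
    and der_a: "\<forall>i. \<forall>s\<in>{0..rbar i}. deriv (\<gamma>a i) s < \<beta>a i"
    and der_c: "\<forall>i e. \<forall>s\<in>{0..rbar i}. deriv (\<gamma>c i e) s < \<beta>c i e"
    and D_psd: "\<forall>z. 0 \<le> z \<bullet> (D *v z)"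
    and T_range: "\<forall>i j. T$i$j \<in> {0..1}"
    and T_prim: "primitive_matrix T"
    and T_ds: "doubly_stochastic T"
    and T_sym: "transpose T = T"
    and \<nu>_even: "even \<nu>"
  shows "strongly_monotone_on {x. \<forall>i. x i \<in> Xset B (loc i) (rbar i)}
           (Fop T \<nu> B loc
              (\<lambda>i r. \<beta>a i * r - \<gamma>a i r)
              (\<lambda>i e t. \<beta>c i e * t - \<gamma>c i e t)
              (\<lambda>\<sigma>. - (D *v \<sigma>) + d))"
proof -
  define M where "M = mpow T \<nu>"
  obtain S :: "real^'n^'n" where S: "\<forall>i j. M $ i $ j = (\<Sum>k\<in>UNIV. S $ k $ i * S $ k $ j)"
    using mpow_even_entry[OF T_sym \<nu>_even] unfolding M_def by blast
  have Mdiag: "0 \<le> M $ i $ i" for i using S by (simp add: sum_nonneg)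
  have "\<exists>ga'. \<forall>i x. (\<gamma>a i has_real_derivative ga' i x) (at x)"
  proof (rule choice, rule allI)
    fix i show "\<exists>f'. \<forall>x. (\<gamma>a i has_real_derivative f' x) (at x)"
      using C2_a unfolding C2_real_def by blast
  qed
  then obtain ga' where ga0: "\<forall>i x. (\<gamma>a i has_real_derivative ga' i x) (at x)" by blast
  have ga': "(\<gamma>a i has_real_derivative ga' i x) (at x)" for i x using ga0 by blast
  have "\<exists>gc'. \<forall>i e x. (\<gamma>c i e has_real_derivative gc' i e x) (at x)"
  proof (rule choice, rule allI, rule choice, rule allI)
    fix i e show "\<exists>f'. \<forall>x. (\<gamma>c i e has_real_derivative f' x) (at x)"
      using C2_c unfolding C2_real_def by blast
  qed
  then obtain gc' where gc0: "\<forall>i e x. (\<gamma>c i e has_real_derivative gc' i e x) (at x)" by blast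
  have gc': "(\<gamma>c i e has_real_derivative gc' i e x) (at x)" for i e x using gc0 by blast
  have "\<exists>\<mu>a. \<forall>i. 0 < \<mu>a i \<and> (\<forall>x\<in>{0..rbar i}. \<forall>y\<in>{0..rbar i}. \<forall>\<theta>\<in>{0..1}.
     \<theta> * \<gamma>a i x + (1 - \<theta>) * \<gamma>a i y + \<mu>a i / 2 * \<theta> * (1 - \<theta>) * (x - y)^2 \<le> \<gamma>a i (\<theta> * x + (1 - \<theta>) * y))"
  proof (rule choice, rule allI)
    fix i show "\<exists>\<mu>. 0 < \<mu> \<and> (\<forall>x\<in>{0..rbar i}. \<forall>y\<in>{0..rbar i}. \<forall>\<theta>\<in>{0..1}.
     \<theta> * \<gamma>a i x + (1 - \<theta>) * \<gamma>a i y + \<mu> / 2 * \<theta> * (1 - \<theta>) * (x - y)^2 \<le> \<gamma>a i (\<theta> * x + (1 - \<theta>) * y))"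
      using sc_a[rule_format, of i] unfolding strongly_concave_on_def by blast
  qed
  then obtain \<mu>a where \<mu>a0: "\<forall>i. 0 < \<mu>a i \<and> (\<forall>x\<in>{0..rbar i}. \<forall>y\<in>{0..rbar i}. \<forall>\<theta>\<in>{0..1}.
     \<theta> * \<gamma>a i x + (1 - \<theta>) * \<gamma>a i y + \<mu>a i / 2 * \<theta> * (1 - \<theta>) * (x - y)^2 \<le> \<gamma>a i (\<theta> * x + (1 - \<theta>) * y))" by blast
  have \<mu>a: "0 < \<mu>a i \<and> (\<forall>x\<in>{0..rbar i}. \<forall>y\<in>{0..rbar i}. \<forall>\<theta>\<in>{0..1}.
     \<theta> * \<gamma>a i x + (1 - \<theta>) * \<gamma>a i y + \<mu>a i / 2 * \<theta> * (1 - \<theta>) * (x - y)^2 \<le> \<gamma>a i (\<theta> * x + (1 - \<theta>) * y))" for i using \<mu>a0 by blast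
  have "\<exists>\<mu>c. \<forall>i e. 0 < \<mu>c i e \<and> (\<forall>x\<in>{0..rbar i}. \<forall>y\<in>{0..rbar i}. \<forall>\<theta>\<in>{0..1}.
     \<theta> * \<gamma>c i e x + (1 - \<theta>) * \<gamma>c i e y + \<mu>c i e / 2 * \<theta> * (1 - \<theta>) * (x - y)^2 \<le> \<gamma>c i e (\<theta> * x + (1 - \<theta>) * y))"
  proof (rule choice, rule allI, rule choice, rule allI)
    fix i e show "\<exists>\<mu>. 0 < \<mu> \<and> (\<forall>x\<in>{0..rbar i}. \<forall>y\<in>{0..rbar i}. \<forall>\<theta>\<in>{0..1}.
     \<theta> * \<gamma>c i e x + (1 - \<theta>) * \<gamma>c i e y + \<mu> / 2 * \<theta> * (1 - \<theta>) * (x - y)^2 \<le> \<gamma>c i e (\<theta> * x + (1 - \<theta>) * y))"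
      using sc_c[rule_format, of i e] unfolding strongly_concave_on_def by blast
  qed
  then obtain \<mu>c where \<mu>c0: "\<forall>i e. 0 < \<mu>c i e \<and> (\<forall>x\<in>{0..rbar i}. \<forall>y\<in>{0..rbar i}. \<forall>\<theta>\<in>{0..1}.
     \<theta> * \<gamma>c i e x + (1 - \<theta>) * \<gamma>c i e y + \<mu>c i e / 2 * \<theta> * (1 - \<theta>) * (x - y)^2 \<le> \<gamma>c i e (\<theta> * x + (1 - \<theta>) * y))" by blast
  have \<mu>c: "0 < \<mu>c i e \<and> (\<forall>x\<in>{0..rbar i}. \<forall>y\<in>{0..rbar i}. \<forall>\<theta>\<in>{0..1}.
     \<theta> * \<gamma>c i e x + (1 - \<theta>) * \<gamma>c i e y + \<mu>c i e / 2 * \<theta> * (1 - \<theta>) * (x - y)^2 \<le> \<gamma>c i e (\<theta> * x + (1 - \<theta>) * y))" for i e using \<mu>c0 by blast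
  define A where "A = range \<mu>a \<union> range (\<lambda>p. \<mu>c (fst p) (snd p))"
  have finA: "finite A" unfolding A_def by simp
  have neA: "A \<noteq> {}" unfolding A_def by simp
  define \<alpha> where "\<alpha> = Min A"
  have \<alpha>pos: "0 < \<alpha>" unfolding \<alpha>_def using finA neA \<mu>a \<mu>c by (auto simp: A_def)
  have \<alpha>a: "\<alpha> \<le> \<mu>a i" for i unfolding \<alpha>_def using finA by (auto simp: A_def intro!: Min_le)
  have \<alpha>c: "\<alpha> \<le> \<mu>c i e" for i e
  proof -
    have "\<mu>c i e \<in> A" unfolding A_def by (rule UnI2, rule image_eqI[of _ _ "(i,e)"]) auto
    then show ?thesis unfolding \<alpha>_def using finA by (rule Min_le[rotated])
  qed
  define s where "s x i = (\<Sum>j\<in>UNIV - {i}. M $ i $ j *\<^sub>R Hmap B (loc j) (x j))" for x :: "'n \<Rightarrow> (real^'e) \<times> real" and i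
  define W where "W x i = M $ i $ i *\<^sub>R (Hmap B (loc i) (x i) v* D) + D *v (M $ i $ i *\<^sub>R Hmap B (loc i) (x i) + s x i) - d" for x i
  define C where "C i z = ((\<chi> e. \<beta>c i e - gc' i e (fst z $ e)), \<beta>a i - ga' i (snd z))" for i and z :: "(real^'e) \<times> real"
  define F where "F = Fop T \<nu> B loc (\<lambda>i r. \<beta>a i * r - \<gamma>a i r) (\<lambda>i e t. \<beta>c i e * t - \<gamma>c i e t) (\<lambda>\<sigma>. - (D *v \<sigma>) + d)"
  have Feq: "F x i = C i (x i) + (W x i v* B, W x i $ loc i)" for x i
    unfolding F_def Fop_def M_def[symmetric] W_def C_def s_def by (rule grad_J[OF ga' gc'])
  define w where "w x y j = Hmap B (loc j) (x j) - Hmap B (loc j) (y j)" for x y :: "'n \<Rightarrow> (real^'e) \<times> real" and j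
  have Hdiff: "Hmap B (loc i) (x i - y i) = w x y i" for x y i
    unfolding w_def using Hmap_lin[of B "loc i"] by (simp add: linear_diff bounded_linear.linear)
  have key: "(F x i - F y i) \<bullet> (x i - y i) = (C i (x i) - C i (y i)) \<bullet> (x i - y i)
       + M $ i $ i * (w x y i \<bullet> (D *v w x y i)) + (\<Sum>j\<in>UNIV. M $ i $ j * (w x y i \<bullet> (D *v w x y j)))" for x y i
  proof -
    have e1: "(F x i - F y i) \<bullet> (x i - y i) = (C i (x i) - C i (y i)) \<bullet> (x i - y i) + (W x i - W y i) \<bullet> w x y i"
      unfolding Feq Hdiff[symmetric]
      by (simp only: inner_diff_left inner_add_left Hmap_adj[symmetric])
    have e2: "(W x i - W y i) \<bullet> w x y i = 2 * M $ i $ i * (w x y i \<bullet> (D *v w x y i)) + w x y i \<bullet> (D *v (s x i - s y i))"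
      unfolding W_def w_def by (rule W_inner)
    have e3: "w x y i \<bullet> (D *v (s x i - s y i)) = (\<Sum>j\<in>UNIV - {i}. M $ i $ j * (w x y i \<bullet> (D *v w x y j)))"
    proof -
      have "s x i - s y i = (\<Sum>j\<in>UNIV - {i}. M $ i $ j *\<^sub>R w x y j)"
        unfolding s_def w_def by (simp add: sum_subtractf scaleR_diff_right)
      then show ?thesis
        by (simp add: linear_sum[OF matrix_vector_mul_linear] matrix_vector_mult_scaleR inner_sum_right)
    qed
    have e4: "(\<Sum>j\<in>UNIV. M $ i $ j * (w x y i \<bullet> (D *v w x y j))) = M $ i $ i * (w x y i \<bullet> (D *v w x y i))
        + (\<Sum>j\<in>UNIV - {i}. M $ i $ j * (w x y i \<bullet> (D *v w x y j)))"
      by (rule sum.remove) auto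
    have aux: "\<And>c m q r::real. c + (2 * m * q + r) = c + m * q + (m * q + r)" by algebra
    show ?thesis unfolding e1 e2 e3 e4 by (rule aux)
  qed
  have cost: "(C i (x i) - C i (y i)) \<bullet> (x i - y i) \<ge> \<alpha> * (norm (x i - y i))^2"
    if xi: "x i \<in> Xset B (loc i) (rbar i)" and yi: "y i \<in> Xset B (loc i) (rbar i)" for x y i
  proof -
    let ?a = "x i" and ?b = "y i"
    have ce: "\<mu>c i e * (fst ?a $ e - fst ?b $ e)^2 \<le> (gc' i e (fst ?b $ e) - gc' i e (fst ?a $ e)) * (fst ?a $ e - fst ?b $ e)" for e
      by (rule sc_mono[where S="{0..rbar i}", OF conjunct2[OF \<mu>c[of i e]] gc']) (use xi yi in \<open>auto simp: Xset_def\<close>)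
    have ca: "\<mu>a i * (snd ?a - snd ?b)^2 \<le> (ga' i (snd ?b) - ga' i (snd ?a)) * (snd ?a - snd ?b)"
      by (rule sc_mono[where S="{0..rbar i}", OF conjunct2[OF \<mu>a[of i]] ga']) (use xi yi in \<open>auto simp: Xset_def\<close>)
    have eq1: "(C i ?a - C i ?b) \<bullet> (?a - ?b) = (\<Sum>e\<in>UNIV. (gc' i e (fst ?b $ e) - gc' i e (fst ?a $ e)) * (fst ?a $ e - fst ?b $ e))
        + (ga' i (snd ?b) - ga' i (snd ?a)) * (snd ?a - snd ?b)"
      by (simp add: C_def inner_prod_def inner_vec_def)
    have eq2: "\<alpha> * (norm (?a - ?b))^2 = \<alpha> * (\<Sum>e\<in>UNIV. (fst ?a $ e - fst ?b $ e)^2) + \<alpha> * (snd ?a - snd ?b)^2"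
      by (simp only: power2_norm_eq_inner) (simp add: inner_prod_def inner_vec_def power2_eq_square distrib_left)
    have i1: "\<alpha> * (\<Sum>e\<in>UNIV. (fst ?a $ e - fst ?b $ e)^2) \<le> (\<Sum>e\<in>UNIV. (gc' i e (fst ?b $ e) - gc' i e (fst ?a $ e)) * (fst ?a $ e - fst ?b $ e))"
      unfolding sum_distrib_left
    proof (rule sum_mono)
      fix e
      have "\<alpha> * (fst ?a $ e - fst ?b $ e)^2 \<le> \<mu>c i e * (fst ?a $ e - fst ?b $ e)^2"
        using \<alpha>c by (intro mult_right_mono) auto
      then show "\<alpha> * (fst ?a $ e - fst ?b $ e)^2 \<le> (gc' i e (fst ?b $ e) - gc' i e (fst ?a $ e)) * (fst ?a $ e - fst ?b $ e)"
        by (rule order_trans[OF _ ce[of e]])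
    qed
    have i2: "\<alpha> * (snd ?a - snd ?b)^2 \<le> \<mu>a i * (snd ?a - snd ?b)^2"
      using \<alpha>a by (intro mult_right_mono) auto
    show ?thesis unfolding eq1 eq2 using i1 i2 ca by linarith
  qed
  show ?thesis
    unfolding strongly_monotone_on_def F_def[symmetric]
  proof (intro exI[of _ \<alpha>] conjI \<alpha>pos ballI)
    fix x y assume x: "x \<in> {x. \<forall>i. x i \<in> Xset B (loc i) (rbar i)}" and y: "y \<in> {x. \<forall>i. x i \<in> Xset B (loc i) (rbar i)}"
    have "\<alpha> * (\<Sum>i\<in>UNIV. (norm (x i - y i))^2) \<le> (\<Sum>i\<in>UNIV. (C i (x i) - C i (y i)) \<bullet> (x i - y i))"
      unfolding sum_distrib_left by (rule sum_mono, rule cost) (use x y in auto)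
    also have "\<dots> \<le> (\<Sum>i\<in>UNIV. (C i (x i) - C i (y i)) \<bullet> (x i - y i)) + (\<Sum>i\<in>UNIV. M $ i $ i * (w x y i \<bullet> (D *v w x y i)))
       + (\<Sum>i\<in>UNIV. \<Sum>j\<in>UNIV. M $ i $ j * (w x y i \<bullet> (D *v w x y j)))"
    proof -
      have "0 \<le> (\<Sum>i\<in>UNIV. M $ i $ i * (w x y i \<bullet> (D *v w x y i)))"
        using Mdiag D_psd by (intro sum_nonneg mult_nonneg_nonneg) auto
      moreover have "0 \<le> (\<Sum>i\<in>UNIV. \<Sum>j\<in>UNIV. M $ i $ j * (w x y i \<bullet> (D *v w x y j)))"
        by (rule quad_nonneg[OF D_psd S])
      ultimately show ?thesis by linarith
    qed
    also have "\<dots> = (\<Sum>i\<in>UNIV. (F x i - F y i) \<bullet> (x i - y i))"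
      unfolding key sum.distrib by simp
    finally show "\<alpha> * (\<Sum>i\<in>UNIV. (norm (x i - y i))^2) \<le> (\<Sum>i\<in>UNIV. (F x i - F y i) \<bullet> (x i - y i))" .
  qed
qed

end
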